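(* Let $(X,d)$ be an Alexandrov space with curvature bounded below by some $K\in\mathbb{R}$, and let $x_1,x_2,y_1,y_2\in X$ satisfy $$d(x_1,y_1)^2+d(x_2,y_2)^2\le d(x_1,y_2)^2+d(x_2,y_1)^2.$$ Let $\gamma_1,\gamma_2:[0,1]\to X$ be constant-speed minimizing geodesics from $x_1$ to $y_1$ and from $x_2$ to $y_2$, respectively. If $\gamma_1(t_0)=\gamma_2(t_0)$ for some $t_0\in(0,1)$, then $\gamma_1(t)=\gamma_2(t)$ for all $t\in[0,1]$.
   Context: An Alexandrov space with curvature $\geq K$ is a finite-dimensional, complete, locally compact, connected length space in which for every quadruple $(p;a,b,c)$ one has $\tilde\angle_K apb+\tilde\angle_K bpc+\tilde\angle_K cpa\le 2\pi$, where $\tilde\angle_K apb$ denotes the angle at $\bar p$ of the comparison triangle with the same side lengths in the model plane of constant curvature $K$. *)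

theory Defs
  imports "HOL-Analysis.Analysis"
begin

(* Comparison angle at the vertex opposite to side c, for a triangle with sides
   a, b (adjacent to the vertex) and c (opposite), in the model plane of curvature K
   (law of cosines). *)
definition cmp_angle :: "real \<Rightarrow> real \<Rightarrow> real \<Rightarrow> real \<Rightarrow> real" where
  "cmp_angle K a b c =
     (if K = 0 then arccos ((a^2 + b^2 - c^2) / (2 * a * b))
      else if K > 0 then
        arccos ((cos (sqrt K * c) - cos (sqrt K * a) * cos (sqrt K * b))
                / (sin (sqrt K * a) * sin (sqrt K * b)))
      else
        arccos ((cosh (sqrt (-K) * a) * cosh (sqrt (-K) * b) - cosh (sqrt (-K) * c))
                / (sinh (sqrt (-K) * a) * sinh (sqrt (-K) * b))))"

definition cmp_defined :: "real \<Rightarrow> real \<Rightarrow> real \<Rightarrow> real \<Rightarrow> bool" where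
  "cmp_defined K a b c \<longleftrightarrow> a > 0 \<and> b > 0 \<and> (K > 0 \<longrightarrow> a + b + c < 2 * pi / sqrt K)"

definition cangle :: "real \<Rightarrow> 'a::metric_space \<Rightarrow> 'a \<Rightarrow> 'a \<Rightarrow> real" where
  "cangle K a p b = cmp_angle K (dist p a) (dist p b) (dist a b)"

definition cangle_defined :: "real \<Rightarrow> 'a::metric_space \<Rightarrow> 'a \<Rightarrow> 'a \<Rightarrow> bool" where
  "cangle_defined K a p b = cmp_defined K (dist p a) (dist p b) (dist a b)"

definition quadruple_condition :: "real \<Rightarrow> 'a::metric_space set \<Rightarrow> bool" where
  "quadruple_condition K S \<longleftrightarrow>
     (\<forall>p\<in>S. \<forall>a\<in>S. \<forall>b\<in>S. \<forall>c\<in>S.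
        cangle_defined K a p b \<and> cangle_defined K b p c \<and> cangle_defined K c p a \<longrightarrow>
        cangle K a p b + cangle K b p c + cangle K c p a \<le> 2 * pi)"

definition curve_length_le :: "(real \<Rightarrow> 'a::metric_space) \<Rightarrow> real \<Rightarrow> bool" where
  "curve_length_le \<gamma> L \<longleftrightarrow>
     (\<forall>n (t::nat \<Rightarrow> real). t 0 = 0 \<and> t n = 1 \<and> (\<forall>i<n. t i \<le> t (Suc i)) \<longrightarrow>
        (\<Sum>i<n. dist (\<gamma> (t i)) (\<gamma> (t (Suc i)))) \<le> L)"

definition length_space :: "'a::metric_space set \<Rightarrow> bool" where
  "length_space S \<longleftrightarrow>
     (\<forall>x\<in>S. \<forall>y\<in>S. \<forall>\<epsilon>>0. \<exists>\<gamma>. continuous_on {0..1} \<gamma> \<and> \<gamma> ` {0..1} \<subseteq> S \<and>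
        \<gamma> 0 = x \<and> \<gamma> 1 = y \<and> curve_length_le \<gamma> (dist x y + \<epsilon>))"

definition hausdorff_pre :: "real \<Rightarrow> real \<Rightarrow> 'a::metric_space set \<Rightarrow> ennreal" where
  "hausdorff_pre s \<delta> A = Inf {(\<Sum>i. ennreal (diameter (U i) powr s)) | U.
       A \<subseteq> (\<Union>i. U i) \<and> (\<forall>i::nat. bounded (U i) \<and> diameter (U i) \<le> \<delta>)}"

definition hausdorff_measure :: "real \<Rightarrow> 'a::metric_space set \<Rightarrow> ennreal" where
  "hausdorff_measure s A = (SUP \<delta>\<in>{0<..}. hausdorff_pre s \<delta> A)"

definition finite_dimensional :: "'a::metric_space set \<Rightarrow> bool" where
  "finite_dimensional S \<longleftrightarrow> (\<exists>s>0. hausdorff_measure s S = 0)"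

definition alexandrov_space :: "real \<Rightarrow> 'a::metric_space set \<Rightarrow> bool" where
  "alexandrov_space K S \<longleftrightarrow> S \<noteq> {} \<and> finite_dimensional S \<and> complete S \<and> locally compact S \<and>
     connected S \<and> length_space S \<and> quadruple_condition K S"

definition cs_geodesic :: "'a::metric_space set \<Rightarrow> (real \<Rightarrow> 'a) \<Rightarrow> 'a \<Rightarrow> 'a \<Rightarrow> bool" where
  "cs_geodesic S \<gamma> x y \<longleftrightarrow> \<gamma> ` {0..1} \<subseteq> S \<and> \<gamma> 0 = x \<and> \<gamma> 1 = y \<and>
     (\<forall>s\<in>{0..1}. \<forall>t\<in>{0..1}. dist (\<gamma> s) (\<gamma> t) = \<bar>s - t\<bar> * dist x y)"

end

theory Submission imports Defs begin

lemma angle_pi: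
  fixes K h k :: real
  assumes h: "h > 0" and k: "k > 0" and sm: "K > 0 \<longrightarrow> sqrt K * h < pi \<and> sqrt K * k < pi"
  shows "cmp_angle K h k (h + k) = pi"
proof -
  consider "K = 0" | "K > 0" | "K < 0" by linarith
  then show ?thesis
  proof cases
    case 1
    have "(h^2 + k^2 - (h+k)^2) / (2 * h * k) = -1" using h k by (simp add: field_simps power2_eq_square)
    then show ?thesis using 1 by (simp add: cmp_angle_def)
  next
    case 2
    define s where "s = sqrt K"
    have s: "s > 0" using 2 by (simp add: s_def)
    have p: "sin (s * h) > 0" "sin (s * k) > 0" using sm 2 s h k by (auto simp: s_def intro!: sin_gt_zero)
    have "cos (s * (h+k)) = cos (s * h) * cos (s * k) - sin (s * h) * sin (s * k)"
      by (simp add: distrib_left cos_add)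
    hence "(cos (s * (h+k)) - cos (s * h) * cos (s * k)) / (sin (s * h) * sin (s * k)) = -1"
      using p by (simp add: field_simps)
    then show ?thesis using 2 by (simp add: cmp_angle_def s_def)
  next
    case 3
    define s where "s = sqrt (-K)"
    have s: "s > 0" using 3 by (simp add: s_def)
    have p: "sinh (s * h) > 0" "sinh (s * k) > 0" using s h k by auto
    have "cosh (s * (h+k)) = cosh (s * h) * cosh (s * k) + sinh (s * h) * sinh (s * k)"
      by (simp add: distrib_left cosh_add)
    hence "(cosh (s * h) * cosh (s * k) - cosh (s * (h+k))) / (sinh (s * h) * sinh (s * k)) = -1"
      using p s h k by (simp add: field_simps)
    then show ?thesis using 3 by (simp add: cmp_angle_def s_def)
  qed
qed

lemma arccos_zero_imp:
  assumes "-1 \<le> r" "r \<le> 1" "arccos r \<le> 0" shows "r = 1"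
proof -
  have "arccos r = 0" using arccos_lbound[OF assms(1,2)] assms(3) by linarith
  hence "cos (arccos r) = 1" by simp
  thus ?thesis using assms by simp
qed

lemma angle_zero:
  fixes K s e :: real
  assumes s: "s > 0" and e: "0 \<le> e" "e \<le> 2 * s" and sm: "K > 0 \<longrightarrow> 2 * s * sqrt K < pi"
    and le: "cmp_angle K s s e \<le> 0"
  shows "e = 0"
proof -
  consider "K = 0" | "K > 0" | "K < 0" by linarith
  then show ?thesis
  proof cases
    case 1
    define r where "r = (s^2 + s^2 - e^2) / (2 * s * s)"
    have "e^2 \<le> (2 * s)^2" using e by (intro power_mono) auto
    hence r1: "-1 \<le> r" "r \<le> 1" using s by (auto simp: r_def field_simps power2_eq_square)
    have "arccos r \<le> 0" using le 1 by (simp add: cmp_angle_def r_def)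
    hence "r = 1" using arccos_zero_imp r1 by blast
    hence "e^2 = 0" using s by (simp add: r_def field_simps power2_eq_square)
    thus ?thesis by simp
  next
    case 2
    define q where "q = sqrt K"
    have q: "q > 0" using 2 by (simp add: q_def)
    have qs: "2 * (q * s) < pi" using sm 2 by (simp add: q_def algebra_simps)
    have p: "sin (q * s) > 0" using q s qs by (intro sin_gt_zero) (auto, smt (verit) mult_pos_pos)
    define r where "r = (cos (q * e) - cos (q * s) * cos (q * s)) / (sin (q * s) * sin (q * s))"
    have sc: "sin (q * s)^2 + cos (q * s)^2 = 1" by simp
    have "cos (q * e) \<le> 1" by simp
    hence a1: "r \<le> 1" using p sc by (simp add: r_def field_simps power2_eq_square)
    have "cos (2 * (q * s)) \<le> cos (q * e)" using q e qs
      by (intro cos_monotone_0_pi_le) (auto simp: mult_left_mono)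
    hence a2: "-1 \<le> r" using p unfolding cos_double r_def by (simp add: field_simps power2_eq_square)
    have "arccos r \<le> 0" using le 2 by (simp add: cmp_angle_def r_def q_def)
    hence "r = 1" using arccos_zero_imp a1 a2 by blast
    hence ceq: "cos (q * e) = 1" using p sc by (simp add: r_def field_simps power2_eq_square)
    show ?thesis
    proof (rule ccontr)
      assume "e \<noteq> 0"
      have "q * e \<le> 2 * (q * s)" using q e mult_left_mono[of e "2 * s" q] by (simp add: algebra_simps)
      hence "q * e \<le> pi" using qs by linarith
      moreover have "0 < q * e" using q e \<open>e \<noteq> 0\<close> by simp
      ultimately
      have "cos (q * e) < cos 0" by (intro cos_monotone_0_pi) auto
      thus False using ceq by simp
    qed
  next
    case 3
    define q where "q = sqrt (-K)"
    have q: "q > 0" using 3 by (simp add: q_def)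
    have p: "sinh (q * s) > 0" using q s by simp
    define r where "r = (cosh (q * s) * cosh (q * s) - cosh (q * e)) / (sinh (q * s) * sinh (q * s))"
    have sc: "cosh (q * s)^2 = sinh (q * s)^2 + 1" by (rule cosh_square_eq)
    have "cosh 0 \<le> cosh (q * e)" using q e by (subst cosh_real_nonneg_le_iff) auto
    hence a1: "r \<le> 1" using p sc by (simp add: r_def field_simps power2_eq_square)
    have "cosh (q * e) \<le> cosh (2 * (q * s))" using q e
      by (subst cosh_real_nonneg_le_iff) (auto simp: mult_left_mono)
    hence a2: "-1 \<le> r" using p sc unfolding cosh_double r_def by (simp add: field_simps power2_eq_square)
    have "arccos r \<le> 0" using le 3 by (simp add: cmp_angle_def r_def q_def)
    hence "r = 1" using arccos_zero_imp a1 a2 by blast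
    thus ?thesis using p sc q by (auto simp: r_def field_simps power2_eq_square)
  qed
qed

lemma branch:
  fixes p u v w :: "'a::metric_space"
  assumes Q: "quadruple_condition K S" and inS: "p \<in> S" "u \<in> S" "v \<in> S" "w \<in> S"
    and h: "dist p u > 0" and s: "s > 0" and pv: "dist p v = s" and pw: "dist p w = s"
    and uv: "dist u v = dist p u + s" and uw: "dist u w = dist p u + s"
    and hs: "dist p u \<le> s" and sm: "K > 0 \<longrightarrow> 2 * s * sqrt K < pi"
  shows "v = w"
proof -
  define h where "h = dist p u"
  have vw: "dist v w \<le> 2 * s" using dist_triangle[of v w p] pv pw by (simp add: dist_commute)
  have per: "K > 0 \<longrightarrow> 4 * s < 2 * pi / sqrt K"
  proof
    assume K: "K > 0"
    hence "2 * s * sqrt K < pi" using sm by simp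
    thus "4 * s < 2 * pi / sqrt K" using K by (simp add: field_simps)
  qed
  have sk: "K > 0 \<longrightarrow> sqrt K * h < pi \<and> sqrt K * s < pi"
  proof
    assume K: "K > 0"
    have "sqrt K * h \<le> sqrt K * s" unfolding h_def using mult_left_mono[OF hs, of "sqrt K"] K by simp
    have "0 < s * sqrt K" using K s by simp
    moreover have "2 * s * sqrt K < pi" using sm K by blast
    ultimately have "s * sqrt K < pi" by linarith
    hence "sqrt K * s < pi" by (simp add: mult.commute)
    moreover note \<open>sqrt K * h \<le> sqrt K * s\<close>
    ultimately show "sqrt K * h < pi \<and> sqrt K * s < pi" by simp
  qed
  have d1: "cangle_defined K u p v" unfolding cangle_defined_def cmp_defined_def
  proof (intro conjI impI)
    show "dist p u > 0" "dist p v > 0" using h s pv by auto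
    assume "K > 0"
    hence "4 * s < 2 * pi / sqrt K" using per by blast
    moreover have "dist p u + dist p v + dist u v \<le> 4 * s" using pv uv hs by linarith
    ultimately show "dist p u + dist p v + dist u v < 2 * pi / sqrt K" by linarith
  qed
  have d2: "cangle_defined K v p w" unfolding cangle_defined_def cmp_defined_def
  proof (intro conjI impI)
    show "dist p v > 0" "dist p w > 0" using s pv pw by auto
    assume "K > 0"
    hence "4 * s < 2 * pi / sqrt K" using per by blast
    moreover have "dist p v + dist p w + dist v w \<le> 4 * s" using pv pw vw by linarith
    ultimately show "dist p v + dist p w + dist v w < 2 * pi / sqrt K" by linarith
  qed
  have d3: "cangle_defined K w p u" unfolding cangle_defined_def cmp_defined_def
  proof (intro conjI impI)
    show "dist p w > 0" "dist p u > 0" using h s pw by auto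
    assume "K > 0"
    hence "4 * s < 2 * pi / sqrt K" using per by blast
    moreover have "dist p w + dist p u + dist w u \<le> 4 * s" using pw uw hs by (simp add: dist_commute)
    ultimately show "dist p w + dist p u + dist w u < 2 * pi / sqrt K" by linarith
  qed
  have a1: "cangle K u p v = pi" unfolding cangle_def using angle_pi[of h s K] h s sk pv uv
    by (simp add: h_def)
  have a3: "cangle K w p u = pi" unfolding cangle_def using angle_pi[of s h K] h s sk pw uw
    by (simp add: h_def dist_commute add.commute)
  have "cangle K u p v + cangle K v p w + cangle K w p u \<le> 2 * pi"
    using bspec[OF bspec[OF bspec[OF bspec[OF Q[unfolded quadruple_condition_def] inS(1)] inS(2)] inS(3)] inS(4)] d1 d2 d3
    by blast
  hence "cmp_angle K s s (dist v w) \<le> 0" using a1 a3 pv pw by (simp add: cangle_def)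
  hence "dist v w = 0" using angle_zero[of s "dist v w" K] s vw sm by simp
  thus ?thesis by simp
qed

lemma local_step:
  fixes x1 x2 y1 y2 :: "'a::metric_space" and \<gamma>1 \<gamma>2 :: "real \<Rightarrow> 'a"
  assumes Q: "quadruple_condition K S"
    and hyp: "(dist x1 y1)^2 + (dist x2 y2)^2 \<le> (dist x1 y2)^2 + (dist x2 y1)^2"
    and g1: "cs_geodesic S \<gamma>1 x1 y1" and g2: "cs_geodesic S \<gamma>2 x2 y2"
    and t: "0 < t" "t < 1" and eq: "\<gamma>1 t = \<gamma>2 t"
    and e: "0 < \<epsilon>" "\<epsilon> \<le> 1 - t" and sm: "K > 0 \<longrightarrow> 2 * \<epsilon> * dist x1 y1 * sqrt K < pi"
  shows "\<gamma>1 (t + \<epsilon>) = \<gamma>2 (t + \<epsilon>)"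
proof -
  define a where "a = dist x1 y1"
  define b where "b = dist x2 y2"
  have G1: "\<And>s r. s \<in> {0..1} \<Longrightarrow> r \<in> {0..1} \<Longrightarrow> dist (\<gamma>1 s) (\<gamma>1 r) = \<bar>s - r\<bar> * a"
    using g1 unfolding cs_geodesic_def a_def by blast
  have G2: "\<And>s r. s \<in> {0..1} \<Longrightarrow> r \<in> {0..1} \<Longrightarrow> dist (\<gamma>2 s) (\<gamma>2 r) = \<bar>s - r\<bar> * b"
    using g2 unfolding cs_geodesic_def b_def by blast
  have S1: "\<And>s. s \<in> {0..1} \<Longrightarrow> \<gamma>1 s \<in> S" using g1 unfolding cs_geodesic_def by blast
  have S2: "\<And>s. s \<in> {0..1} \<Longrightarrow> \<gamma>2 s \<in> S" using g2 unfolding cs_geodesic_def by blast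
  have E1: "\<gamma>1 0 = x1" "\<gamma>1 1 = y1" using g1 unfolding cs_geodesic_def by auto
  have E2: "\<gamma>2 0 = x2" "\<gamma>2 1 = y2" using g2 unfolding cs_geodesic_def by auto
  have a0: "a \<ge> 0" "b \<ge> 0" by (auto simp: a_def b_def)
  define z where "z = \<gamma>1 t"
  have tI: "t \<in> {0..1}" using t by auto
  have xz1: "dist x1 z = t * a" using G1[of 0 t] t E1 by (simp add: z_def)
  have zy1: "dist z y1 = (1 - t) * a" using G1[of t 1] t E1 by (simp add: z_def)
  have xz2: "dist x2 z = t * b" using G2[of 0 t] t E2 eq by (simp add: z_def)
  have zy2: "dist z y2 = (1 - t) * b" using G2[of t 1] t E2 eq by (simp add: z_def)
  have A: "dist x1 y2 \<le> t * a + (1 - t) * b" using dist_triangle[of x1 y2 z] xz1 zy2 by simp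
  have B: "dist x2 y1 \<le> t * b + (1 - t) * a" using dist_triangle[of x2 y1 z] xz2 zy1 by simp
  have A2: "(dist x1 y2)^2 \<le> (t * a + (1 - t) * b)^2" by (rule power_mono[OF A]) simp
  have B2: "(dist x2 y1)^2 \<le> (t * b + (1 - t) * a)^2" by (rule power_mono[OF B]) simp
  have iden: "(t * a + (1 - t) * b)^2 + (t * b + (1 - t) * a)^2 = a^2 + b^2 - 2 * (t * (1 - t) * (a - b)^2)"
    by (simp add: power2_eq_square algebra_simps)
  have le0: "(t * (1 - t)) * (a - b)^2 \<le> 0" using hyp A2 B2 iden unfolding a_def b_def by linarith
  have tp: "0 < t * (1 - t)" using t by simp
  have "(a - b)^2 \<le> 0"
  proof (rule ccontr)
    assume "\<not> (a - b)^2 \<le> 0"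
    hence "0 < (t * (1 - t)) * (a - b)^2" using tp by simp
    thus False using le0 by linarith
  qed
  hence ab: "b = a" by simp
  have A': "dist x1 y2 \<le> a" using A ab by (simp add: algebra_simps)
  have B': "dist x2 y1 \<le> a" using B ab by (simp add: algebra_simps)
  have d12: "dist x1 y2 = a"
  proof (rule ccontr)
    assume "dist x1 y2 \<noteq> a"
    hence "dist x1 y2 < a" using A' by simp
    hence "(dist x1 y2)^2 < a^2" by (intro power_strict_mono) auto
    moreover have "(dist x2 y1)^2 \<le> a^2" using B' by (intro power_mono) auto
    moreover have "(dist x2 y2)^2 = a^2" using ab by (simp add: b_def)
    ultimately show False using hyp unfolding a_def by linarith
  qed
  have teI: "t + \<epsilon> \<in> {0..1}" using t e by auto
  show ?thesis
  proof (cases "a = 0")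
    case True
    have "\<gamma>1 (t + \<epsilon>) = x1" using G1[of "t + \<epsilon>" 0] teI E1 True by simp
    moreover have "\<gamma>2 (t + \<epsilon>) = x2" using G2[of "t + \<epsilon>" 0] teI E2 True ab by simp
    moreover have "x1 = x2" using xz1 xz2 True ab by simp
    ultimately show ?thesis by simp
  next
    case False
    hence apos: "a > 0" using a0 by simp
    define \<delta> where "\<delta> = min \<epsilon> t"
    have dl: "0 < \<delta>" "\<delta> \<le> \<epsilon>" "\<delta> \<le> t" using t e by (auto simp: \<delta>_def)
    define u where "u = \<gamma>1 (t - \<delta>)"
    define v where "v = \<gamma>1 (t + \<epsilon>)"
    define w where "w = \<gamma>2 (t + \<epsilon>)"
    have tdI: "t - \<delta> \<in> {0..1}" using dl t by auto
    have pu: "dist z u = \<delta> * a" using G1[of t "t - \<delta>"] tI tdI dl by (simp add: z_def u_def)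
    have pv: "dist z v = \<epsilon> * a" using G1[of t "t + \<epsilon>"] tI teI e by (simp add: z_def v_def)
    have pw: "dist z w = \<epsilon> * a" using G2[of t "t + \<epsilon>"] tI teI e eq ab by (simp add: z_def w_def)
    have uv: "dist u v = dist z u + \<epsilon> * a" using G1[of "t - \<delta>" "t + \<epsilon>"] tdI teI e dl pu
      by (simp add: u_def v_def algebra_simps)
    have uw1: "dist u w \<le> dist z u + \<epsilon> * a" using dist_triangle[of u w z] pw by (simp add: dist_commute)
    have xu: "dist x1 u = (t - \<delta>) * a" using G1[of 0 "t - \<delta>"] tdI dl E1 by (simp add: u_def)
    have wy: "dist w y2 = (1 - t - \<epsilon>) * a" using G2[of "t + \<epsilon>" 1] teI e E2 ab by (simp add: w_def)
    have "dist x1 y2 \<le> dist x1 u + dist u y2" by (rule dist_triangle)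
    also have "dist u y2 \<le> dist u w + dist w y2" by (rule dist_triangle)
    finally have "a \<le> (t - \<delta>) * a + dist u w + (1 - t - \<epsilon>) * a" using d12 xu wy by simp
    hence uw2: "dist z u + \<epsilon> * a \<le> dist u w" using pu by (simp add: algebra_simps)
    have "v = w"
    proof (rule branch[OF Q])
      show "z \<in> S" "u \<in> S" "v \<in> S" "w \<in> S" using S1 S2 tI tdI teI by (auto simp: z_def u_def v_def w_def)
      show "dist z u > 0" using pu dl apos by simp
      show "\<epsilon> * a > 0" using e apos by simp
      show "dist z v = \<epsilon> * a" "dist z w = \<epsilon> * a" by (fact pv, fact pw)
      show "dist u v = dist z u + \<epsilon> * a" by (fact uv)
      show "dist u w = dist z u + \<epsilon> * a" using uw1 uw2 by linarith
      show "dist z u \<le> \<epsilon> * a" using pu dl apos by (simp add: mult_right_mono)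
      show "K > 0 \<longrightarrow> 2 * (\<epsilon> * a) * sqrt K < pi" using sm by (simp add: a_def mult.assoc)
    qed
    thus ?thesis by (simp add: v_def w_def)
  qed
qed

lemma right_half:
  fixes x1 x2 y1 y2 :: "'a::metric_space" and \<gamma>1 \<gamma>2 :: "real \<Rightarrow> 'a"
  assumes Q: "quadruple_condition K S"
    and hyp: "(dist x1 y1)^2 + (dist x2 y2)^2 \<le> (dist x1 y2)^2 + (dist x2 y1)^2"
    and g1: "cs_geodesic S \<gamma>1 x1 y1" and g2: "cs_geodesic S \<gamma>2 x2 y2"
    and t: "0 < t0" "t0 < 1" and eq: "\<gamma>1 t0 = \<gamma>2 t0"
    and tt: "t0 \<le> t" "t \<le> 1"
  shows "\<gamma>1 t = \<gamma>2 t"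
proof -
  define a where "a = dist x1 y1"
  define c where "c = (if K > 0 \<and> a > 0 then pi / (4 * a * sqrt K) else 1)"
  have cpos: "c > 0" by (auto simp: c_def)
  have cK: "K > 0 \<longrightarrow> 2 * \<epsilon> * a * sqrt K < pi" if "0 < \<epsilon>" "\<epsilon> \<le> c" for \<epsilon>
  proof
    assume K: "K > 0"
    show "2 * \<epsilon> * a * sqrt K < pi"
    proof (cases "a > 0")
      case True
      have "2 * \<epsilon> * a * sqrt K \<le> 2 * c * a * sqrt K"
        using that True K by (intro mult_right_mono) auto
      also have "\<dots> = pi / 2" using True K by (simp add: c_def field_simps)
      finally show ?thesis using pi_gt_zero by linarith
    next
      case False
      hence "a = 0" by (simp add: a_def)
      thus ?thesis by simp
    qed
  qed
  have P: "\<forall>s. t0 \<le> s \<and> s \<le> 1 \<and> s \<le> t0 + real n * c \<longrightarrow> \<gamma>1 s = \<gamma>2 s" for n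
  proof (induction n)
    case 0
    then show ?case using eq by auto
  next
    case (Suc n)
    show ?case
    proof (intro allI impI)
      fix s assume s: "t0 \<le> s \<and> s \<le> 1 \<and> s \<le> t0 + real (Suc n) * c"
      show "\<gamma>1 s = \<gamma>2 s"
      proof (cases "s \<le> t0 + real n * c")
        case True
        then show ?thesis using Suc.IH s by blast
      next
        case False
        define p where "p = t0 + real n * c"
        have p0: "t0 \<le> p" using cpos by (simp add: p_def)
        have ps: "p < s" using False by (simp add: p_def)
        have eqp: "\<gamma>1 p = \<gamma>2 p" using Suc.IH p0 ps s by (simp add: p_def)
        have "s - p \<le> c" using s by (simp add: p_def algebra_simps)
        have "\<gamma>1 (p + (s - p)) = \<gamma>2 (p + (s - p))"
        proof (rule local_step[OF Q hyp g1 g2 _ _ eqp])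
          show "0 < p" "p < 1" using p0 ps s t by auto
          show "0 < s - p" "s - p \<le> 1 - p" using ps s by auto
          show "K > 0 \<longrightarrow> 2 * (s - p) * dist x1 y1 * sqrt K < pi"
            using cK[of "s - p"] ps \<open>s - p \<le> c\<close> by (simp add: a_def)
        qed
        thus ?thesis by simp
      qed
    qed
  qed
  obtain n where "1 < real n * c" using reals_Archimedean3[OF cpos] by blast
  thus ?thesis using P[of n] tt t by auto
qed

theorem lemma3p2:
  fixes S :: "'a::metric_space set" and K :: real
    and x1 x2 y1 y2 :: 'a and \<gamma>1 \<gamma>2 :: "real \<Rightarrow> 'a" and t0 :: real
  assumes "alexandrov_space K S"
    and "x1 \<in> S" "x2 \<in> S" "y1 \<in> S" "y2 \<in> S"
    and "(dist x1 y1)^2 + (dist x2 y2)^2 \<le> (dist x1 y2)^2 + (dist x2 y1)^2"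
    and "cs_geodesic S \<gamma>1 x1 y1" and "cs_geodesic S \<gamma>2 x2 y2"
    and "t0 \<in> {0<..<1}" and "\<gamma>1 t0 = \<gamma>2 t0"
  shows "\<forall>t\<in>{0..1}. \<gamma>1 t = \<gamma>2 t"
proof
  fix t :: real assume tI: "t \<in> {0..1}"
  have Q: "quadruple_condition K S" using assms(1) by (simp add: alexandrov_space_def)
  have t0: "0 < t0" "t0 < 1" using assms(9) by auto
  show "\<gamma>1 t = \<gamma>2 t"
  proof (cases "t0 \<le> t")
    case True
    then show ?thesis using right_half[OF Q assms(6,7,8) t0 assms(10)] tI by auto
  next
    case False
    define r1 where "r1 = (\<lambda>s. \<gamma>1 (1 - s))"
    define r2 where "r2 = (\<lambda>s. \<gamma>2 (1 - s))"
    have rev: "cs_geodesic S (\<lambda>s. g (1 - s)) y x" if "cs_geodesic S g x y" for g x y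
    proof -
      have im: "(\<lambda>s. g (1 - s)) ` {0..1} \<subseteq> S"
      proof
        fix q assume "q \<in> (\<lambda>s. g (1 - s)) ` {0..1}"
        then obtain s where "s \<in> {0..1}" "q = g (1 - s)" by auto
        moreover have "1 - s \<in> {0..1}" using \<open>s \<in> {0..1}\<close> by auto
        ultimately show "q \<in> S" using that unfolding cs_geodesic_def by blast
      qed
      have d: "dist (g (1 - s)) (g (1 - r)) = \<bar>s - r\<bar> * dist y x" if "s \<in> {0..1}" "r \<in> {0..1}" for s r
      proof -
        have "1 - s \<in> {0..1}" "1 - r \<in> {0..1}" using that by auto
        hence "dist (g (1 - s)) (g (1 - r)) = \<bar>(1 - s) - (1 - r)\<bar> * dist x y"
          using \<open>cs_geodesic S g x y\<close> unfolding cs_geodesic_def by blast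
        thus ?thesis by (simp add: dist_commute abs_minus_commute)
      qed
      show ?thesis using im d that unfolding cs_geodesic_def by auto
    qed
    have h': "(dist y1 x1)^2 + (dist y2 x2)^2 \<le> (dist y1 x2)^2 + (dist y2 x1)^2"
      using assms(6) by (simp add: dist_commute add.commute)
    have "r1 (1 - t) = r2 (1 - t)"
    proof (rule right_half[OF Q h'])
      show "cs_geodesic S r1 y1 x1" unfolding r1_def by (rule rev[OF assms(7)])
      show "cs_geodesic S r2 y2 x2" unfolding r2_def by (rule rev[OF assms(8)])
      show "0 < 1 - t0" "1 - t0 < 1" using t0 by auto
      show "r1 (1 - t0) = r2 (1 - t0)" using assms(10) by (simp add: r1_def r2_def)
      show "1 - t0 \<le> 1 - t" "1 - t \<le> 1" using False tI by auto
    qed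
    thus ?thesis by (simp add: r1_def r2_def)
  qed
qed

end
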